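(* Let $P\in\mathbb{R}_+^{n\times n}$ be sub-stochastic, $w\in\mathbb{R}^n_+$, and $c\in\mathbb{R}^n$, and let $\mathcal X=\{x\in\mathbb{R}^n:\,x=S_0^w(P'x+c)\}$ be the set of equilibria. Let $x(t)$ be the sequence defined by $x(t+1)=S_0^w(P'x(t)+c)$, $t\ge0$, with $x(0)=x_0$. Then: (i) $\mathcal X$ admits a minimal element $\underline x$ and a maximal element $\overline x$ (with respect to the entrywise order on $\mathbb{R}^n$); (ii) if $x_0=0$, then $x(t)\to\underline x$ as $t\to+\infty$; (iii) if $x_0=w$, then $x(t)\to\overline x$ as $t\to+\infty$; (iv) writing $\underline x(c)$ and $\overline x(c)$ for the minimal and maximal equilibria as functions of $c$ (with $P,w$ fixed), the maps $c\mapsto\underline x(c)$ and $c\mapsto\overline x(c)$ are monotone nondecreasing from $\mathbb{R}^n$ to $\mathcal L_0^w=\{x:\,0\le x\le w\}$.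
   Context: A nonnegative matrix $P\in\mathbb{R}_+^{n\times n}$ is sub-stochastic if $P\mathbbm{1}\le\mathbbm{1}$ (this includes stochastic matrices, $P\mathbbm{1}=\mathbbm{1}$). For $w\in\mathbb{R}^n_+$, $(S_0^w(x))_i=\min\{\max\{x_i,0\},w_i\}$. $P'$ is the transpose of $P$. Vectors are ordered entrywise. *)

theory Defs
  imports "HOL-Analysis.Analysis"
begin

definition sub_stochastic :: "real^'n^'n \<Rightarrow> bool" where
  "sub_stochastic P \<longleftrightarrow> (\<forall>i j. 0 \<le> P $ i $ j) \<and> P *v (vec 1) \<le> vec 1"

definition sat0 :: "real^'n \<Rightarrow> real^'n \<Rightarrow> real^'n" where
  "sat0 w x = (\<chi> i. min (max (x $ i) 0) (w $ i))"

definition dyn :: "real^'n^'n \<Rightarrow> real^'n \<Rightarrow> real^'n \<Rightarrow> real^'n \<Rightarrow> real^'n" where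
  "dyn P w c x = sat0 w (transpose P *v x + c)"

definition equilibria :: "real^'n^'n \<Rightarrow> real^'n \<Rightarrow> real^'n \<Rightarrow> (real^'n) set" where
  "equilibria P w c = {x. x = dyn P w c x}"

definition min_eq :: "real^'n^'n \<Rightarrow> real^'n \<Rightarrow> real^'n \<Rightarrow> real^'n" where
  "min_eq P w c = (LEAST x. x \<in> equilibria P w c)"

definition max_eq :: "real^'n^'n \<Rightarrow> real^'n \<Rightarrow> real^'n \<Rightarrow> real^'n" where
  "max_eq P w c = (GREATEST x. x \<in> equilibria P w c)"

end

theory Submission imports Defs begin

lemma dyn_mono:
  assumes P: "\<forall>i j. 0 \<le> P $ i $ j" and xy: "x \<le> y" and cc: "c \<le> c'"
  shows "dyn P w c x \<le> dyn P w c' y"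
proof -
  have "(transpose P *v x + c) $ i \<le> (transpose P *v y + c') $ i" for i
  proof -
    have "(\<Sum>j\<in>UNIV. P $ j $ i * x $ j) \<le> (\<Sum>j\<in>UNIV. P $ j $ i * y $ j)"
      using P xy by (intro sum_mono mult_left_mono) (auto simp: less_eq_vec_def)
    then show ?thesis using cc
      by (simp add: matrix_vector_mult_def transpose_def less_eq_vec_def add_mono)
  qed
  then show ?thesis
    unfolding dyn_def sat0_def less_eq_vec_def vec_lambda_beta
    by (meson max.mono min.mono order_refl)
qed

lemma dyn_range:
  assumes "0 \<le> w" shows "0 \<le> dyn P w c x \<and> dyn P w c x \<le> w"
  using assms by (auto simp: dyn_def sat0_def less_eq_vec_def)

lemma dyn_cont:
  assumes "X \<longlonglongrightarrow> L"
  shows "(\<lambda>t. dyn P w c (X t)) \<longlonglongrightarrow> dyn P w c L"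
proof (rule vec_tendstoI)
  fix i
  have "(\<lambda>t. \<Sum>j\<in>UNIV. P $ j $ i * X t $ j) \<longlonglongrightarrow> (\<Sum>j\<in>UNIV. P $ j $ i * L $ j)"
    using assms by (auto intro!: tendsto_intros)
  then have "(\<lambda>t. min (max ((\<Sum>j\<in>UNIV. P $ j $ i * X t $ j) + c $ i) 0) (w $ i))
     \<longlonglongrightarrow> min (max ((\<Sum>j\<in>UNIV. P $ j $ i * L $ j) + c $ i) 0) (w $ i)"
    by (rule tendsto_min[OF tendsto_max[OF tendsto_add[OF _ tendsto_const] tendsto_const] tendsto_const])
  then show "(\<lambda>t. dyn P w c (X t) $ i) \<longlonglongrightarrow> dyn P w c L $ i"
    by (simp add: dyn_def sat0_def matrix_vector_mult_def transpose_def)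
qed

lemma inc_conv:
  fixes X :: "nat \<Rightarrow> real^'n"
  assumes "\<And>t. X t \<le> X (Suc t)" "\<And>t. X t \<le> B"
  shows "\<exists>L. X \<longlonglongrightarrow> L"
proof -
  have "\<exists>l. (\<lambda>t. X t $ i) \<longlonglongrightarrow> l" for i
  proof -
    have "incseq (\<lambda>t. X t $ i)"
      using assms(1) by (intro incseq_SucI) (auto simp: less_eq_vec_def)
    moreover have "\<forall>t. X t $ i \<le> B $ i" using assms(2) by (auto simp: less_eq_vec_def)
    ultimately show ?thesis by (metis incseq_convergent)
  qed
  then obtain l where l: "\<And>i. (\<lambda>t. X t $ i) \<longlonglongrightarrow> l i" by metis
  have "X \<longlonglongrightarrow> (\<chi> i. l i)" by (rule vec_tendstoI) (simp add: l)
  then show ?thesis by blast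
qed

lemma dec_conv:
  fixes X :: "nat \<Rightarrow> real^'n"
  assumes "\<And>t. X (Suc t) \<le> X t" "\<And>t. B \<le> X t"
  shows "\<exists>L. X \<longlonglongrightarrow> L"
proof -
  have "\<exists>l. (\<lambda>t. X t $ i) \<longlonglongrightarrow> l" for i
  proof -
    have "decseq (\<lambda>t. X t $ i)"
      using assms(1) by (intro decseq_SucI) (auto simp: less_eq_vec_def)
    moreover have "\<forall>t. B $ i \<le> X t $ i" using assms(2) by (auto simp: less_eq_vec_def)
    ultimately show ?thesis by (metis decseq_convergent)
  qed
  then obtain l where l: "\<And>i. (\<lambda>t. X t $ i) \<longlonglongrightarrow> l i" by metis
  have "X \<longlonglongrightarrow> (\<chi> i. l i)" by (rule vec_tendstoI) (simp add: l)
  then show ?thesis by blast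
qed

lemma lim_le:
  fixes X :: "nat \<Rightarrow> real^'n"
  assumes "X \<longlonglongrightarrow> L" "\<And>t. X t \<le> z" shows "L \<le> z"
  unfolding less_eq_vec_def
proof
  fix i
  have "(\<lambda>t. X t $ i) \<longlonglongrightarrow> L $ i" by (intro tendsto_intros assms)
  then show "L $ i \<le> z $ i"
    by (rule LIMSEQ_le_const2) (use assms(2) in \<open>auto simp: less_eq_vec_def\<close>)
qed

lemma lim_ge:
  fixes X :: "nat \<Rightarrow> real^'n"
  assumes "X \<longlonglongrightarrow> L" "\<And>t. z \<le> X t" shows "z \<le> L"
  unfolding less_eq_vec_def
proof
  fix i
  have "(\<lambda>t. X t $ i) \<longlonglongrightarrow> L $ i" by (intro tendsto_intros assms)
  then show "z $ i \<le> L $ i"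
    by (rule LIMSEQ_le_const) (use assms(2) in \<open>auto simp: less_eq_vec_def\<close>)
qed

lemma fixpt:
  assumes "X \<longlonglongrightarrow> L" "\<And>t. X (Suc t) = dyn P w c (X t)"
  shows "L \<in> equilibria P w c"
proof -
  have "(\<lambda>t. X (Suc t)) \<longlonglongrightarrow> L" using assms(1) by (rule LIMSEQ_Suc)
  moreover have "(\<lambda>t. X (Suc t)) \<longlonglongrightarrow> dyn P w c L"
    unfolding assms(2) by (rule dyn_cont[OF assms(1)])
  ultimately show ?thesis unfolding equilibria_def using LIMSEQ_unique by blast
qed

lemma min_lemma:
  assumes P: "\<forall>i j. 0 \<le> P $ i $ j" and w: "0 \<le> w"
  shows "(\<lambda>t. (dyn P w c ^^ t) 0) \<longlonglongrightarrow> min_eq P w c \<and> min_eq P w c \<in> equilibria P w c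
    \<and> (\<forall>c' z. c \<le> c' \<longrightarrow> 0 \<le> z \<longrightarrow> dyn P w c' z \<le> z \<longrightarrow> min_eq P w c \<le> z)"
proof -
  define X where "X t = (dyn P w c ^^ t) 0" for t
  have XS: "X (Suc t) = dyn P w c (X t)" for t by (simp add: X_def)
  have inc: "X t \<le> X (Suc t)" for t
  proof (induction t)
    case 0 then show ?case using dyn_range[OF w] by (simp add: X_def)
  next
    case (Suc t) then show ?case unfolding XS by (intro dyn_mono[OF P]) auto
  qed
  have bd: "X t \<le> w" for t
    by (cases t) (use w dyn_range[OF w] in \<open>auto simp: X_def\<close>)
  obtain L where L: "X \<longlonglongrightarrow> L" using inc_conv[of X, OF inc bd] by blast
  have Leq: "L \<in> equilibria P w c" by (rule fixpt[OF L XS])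
  have low: "L \<le> z" if "c \<le> c'" "0 \<le> z" "dyn P w c' z \<le> z" for c' z
  proof -
    have "X t \<le> z" for t
    proof (induction t)
      case 0 then show ?case using that by (simp add: X_def)
    next
      case (Suc t)
      have "X (Suc t) \<le> dyn P w c' z" unfolding XS by (rule dyn_mono[OF P Suc that(1)])
      then show ?case using that(3) by (rule order_trans)
    qed
    then show ?thesis by (rule lim_le[OF L])
  qed
  have "min_eq P w c = L"
    unfolding min_eq_def
  proof (rule Least_equality)
    show "L \<in> equilibria P w c" by (rule Leq)
    fix y assume "y \<in> equilibria P w c"
    then have y: "y = dyn P w c y" by (simp add: equilibria_def)
    show "L \<le> y" by (rule low[of c]) (use y dyn_range[OF w, of P c y] in auto)
  qed
  then show ?thesis using L Leq low unfolding X_def by auto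
qed

lemma max_lemma:
  assumes P: "\<forall>i j. 0 \<le> P $ i $ j" and w: "0 \<le> w"
  shows "(\<lambda>t. (dyn P w c ^^ t) w) \<longlonglongrightarrow> max_eq P w c \<and> max_eq P w c \<in> equilibria P w c
    \<and> (\<forall>c' z. c' \<le> c \<longrightarrow> z \<le> w \<longrightarrow> z \<le> dyn P w c' z \<longrightarrow> z \<le> max_eq P w c)"
proof -
  define X where "X t = (dyn P w c ^^ t) w" for t
  have XS: "X (Suc t) = dyn P w c (X t)" for t by (simp add: X_def)
  have dec: "X (Suc t) \<le> X t" for t
  proof (induction t)
    case 0 then show ?case using dyn_range[OF w] by (simp add: X_def)
  next
    case (Suc t) then show ?case unfolding XS by (intro dyn_mono[OF P]) auto
  qed
  have bd: "0 \<le> X t" for t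
    by (cases t) (use w dyn_range[OF w] in \<open>auto simp: X_def\<close>)
  obtain L where L: "X \<longlonglongrightarrow> L" using dec_conv[of X, OF dec bd] by blast
  have Leq: "L \<in> equilibria P w c" by (rule fixpt[OF L XS])
  have up: "z \<le> L" if "c' \<le> c" "z \<le> w" "z \<le> dyn P w c' z" for c' z
  proof -
    have "z \<le> X t" for t
    proof (induction t)
      case 0 then show ?case using that by (simp add: X_def)
    next
      case (Suc t)
      have "dyn P w c' z \<le> X (Suc t)" unfolding XS by (rule dyn_mono[OF P Suc that(1)])
      with that(3) show ?case by (rule order_trans)
    qed
    then show ?thesis by (rule lim_ge[OF L])
  qed
  have "max_eq P w c = L"
    unfolding max_eq_def
  proof (rule Greatest_equality)
    show "L \<in> equilibria P w c" by (rule Leq)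
    fix y assume "y \<in> equilibria P w c"
    then have y: "y = dyn P w c y" by (simp add: equilibria_def)
    show "y \<le> L" by (rule up[of c]) (use y dyn_range[OF w, of P c y] in auto)
  qed
  then show ?thesis using L Leq up unfolding X_def by auto
qed

lemma iter_eq:
  assumes "\<forall>t. x (Suc t) = f (x t)" shows "x = (\<lambda>t. (f ^^ t) (x 0))"
proof
  fix t show "x t = (f ^^ t) (x 0)" by (induction t) (use assms in auto)
qed

theorem proposition1:
  fixes P :: "real^'n^'n" and w c :: "real^'n"
  assumes "sub_stochastic P" and "0 \<le> w"
  shows "min_eq P w c \<in> equilibria P w c \<and> (\<forall>x \<in> equilibria P w c. min_eq P w c \<le> x)
    \<and> max_eq P w c \<in> equilibria P w c \<and> (\<forall>x \<in> equilibria P w c. x \<le> max_eq P w c)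
    \<and> (\<forall>x :: nat \<Rightarrow> real^'n. x 0 = 0 \<and> (\<forall>t. x (Suc t) = dyn P w c (x t))
          \<longrightarrow> x \<longlonglongrightarrow> min_eq P w c)
    \<and> (\<forall>x :: nat \<Rightarrow> real^'n. x 0 = w \<and> (\<forall>t. x (Suc t) = dyn P w c (x t))
          \<longrightarrow> x \<longlonglongrightarrow> max_eq P w c)
    \<and> mono (\<lambda>c'. min_eq P w c') \<and> mono (\<lambda>c'. max_eq P w c')
    \<and> (\<forall>c'. min_eq P w c' \<in> {0..w} \<and> max_eq P w c' \<in> {0..w})"
proof -
  have P: "\<forall>i j. 0 \<le> P $ i $ j" using assms(1) by (simp add: sub_stochastic_def)
  note mn = min_lemma[OF P assms(2)] and mx = max_lemma[OF P assms(2)]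
  have inr: "x \<in> equilibria P w c' \<Longrightarrow> x \<in> {0..w}" for x c'
    using dyn_range[OF assms(2), of P c' x] by (simp add: equilibria_def)
  have A: "\<forall>x\<in>equilibria P w c. min_eq P w c \<le> x"
  proof
    fix x assume "x \<in> equilibria P w c"
    then have "x = dyn P w c x" by (simp add: equilibria_def)
    then show "min_eq P w c \<le> x" using mn[of c] dyn_range[OF assms(2), of P c x] by auto
  qed
  have B: "\<forall>x\<in>equilibria P w c. x \<le> max_eq P w c"
  proof
    fix x assume "x \<in> equilibria P w c"
    then have "x = dyn P w c x" by (simp add: equilibria_def)
    then show "x \<le> max_eq P w c" using mx[of c] dyn_range[OF assms(2), of P c x] by auto
  qed
  have C: "\<forall>x :: nat \<Rightarrow> real^'n. x 0 = 0 \<and> (\<forall>t. x (Suc t) = dyn P w c (x t))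
          \<longrightarrow> x \<longlonglongrightarrow> min_eq P w c"
  proof (intro allI impI)
    fix x :: "nat \<Rightarrow> real^'n" assume h: "x 0 = 0 \<and> (\<forall>t. x (Suc t) = dyn P w c (x t))"
    then have "x = (\<lambda>t. (dyn P w c ^^ t) 0)" using iter_eq[of x "dyn P w c"] by auto
    then show "x \<longlonglongrightarrow> min_eq P w c" using mn[of c] by simp
  qed
  have D: "\<forall>x :: nat \<Rightarrow> real^'n. x 0 = w \<and> (\<forall>t. x (Suc t) = dyn P w c (x t))
          \<longrightarrow> x \<longlonglongrightarrow> max_eq P w c"
  proof (intro allI impI)
    fix x :: "nat \<Rightarrow> real^'n" assume h: "x 0 = w \<and> (\<forall>t. x (Suc t) = dyn P w c (x t))"
    then have "x = (\<lambda>t. (dyn P w c ^^ t) w)" using iter_eq[of x "dyn P w c"] by auto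
    then show "x \<longlonglongrightarrow> max_eq P w c" using mx[of c] by simp
  qed
  have E: "mono (\<lambda>c'. min_eq P w c')"
  proof (rule monoI)
    fix a b :: "real^'n" assume ab: "a \<le> b"
    have "min_eq P w b \<in> equilibria P w b" using mn[of b] by blast
    then have e: "min_eq P w b = dyn P w b (min_eq P w b)" by (simp add: equilibria_def)
    have "0 \<le> min_eq P w b" using dyn_range[OF assms(2), of P b "min_eq P w b"] e by simp
    then show "min_eq P w a \<le> min_eq P w b" using mn[of a] ab e by (metis order_refl)
  qed
  have F: "mono (\<lambda>c'. max_eq P w c')"
  proof (rule monoI)
    fix a b :: "real^'n" assume ab: "a \<le> b"
    have "max_eq P w a \<in> equilibria P w a" using mx[of a] by blast
    then have e: "max_eq P w a = dyn P w a (max_eq P w a)" by (simp add: equilibria_def)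
    have "max_eq P w a \<le> w" using dyn_range[OF assms(2), of P a "max_eq P w a"] e by simp
    then show "max_eq P w a \<le> max_eq P w b" using mx[of b] ab e by (metis order_refl)
  qed
  have G: "\<forall>c'. min_eq P w c' \<in> {0..w} \<and> max_eq P w c' \<in> {0..w}"
    using mn mx inr by blast
  show ?thesis using mn[of c] mx[of c] A B C D E F G by blast
qed

end
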